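(* Let $\varphi$ be a DBI normal formula and let $\theta$ be a formula that is independent of $\varphi$. Then for every pointed Kripke model $(\mathcal{M},v)$: $\mathcal{M},v\vDash\theta$ if and only if $\mathcal{M}\odot\mathcal{U}_\varphi,(v,0)\vDash\theta$.
   Context: Agents $\mathcal{A}=\{1,\dots,n\}$, $n>1$; language $\mathcal{L}$: $\varphi ::= p \mid \neg\varphi \mid (\varphi\wedge\varphi)\mid B_i\varphi$, $\top$ the usual tautology. Kripke model $\mathcal{M}=\langle S,R,V\rangle$ (nonempty $S$, $R_i\subseteq S\times S$, $V:\mathit{Prop}\to 2^S$), standard truth. Action model $\mathcal{U}=\langle E,Q,\mathsf{pre}\rangle$ (nonempty $E$, $Q_i\subseteq E\times E$, $\mathsf{pre}:E\to\mathcal{L}$). Pointed update of $(\mathcal{M},w)$ with $(\mathcal{U},\alpha)$, defined iff $\mathcal{M},w\vDash\mathsf{pre}(\alpha)$: with $T=\{(x,\beta)\in S\times E\mid\mathcal{M},x\vDash\mathsf{pre}(\beta)\}$, $\mathcal{M}\odot\mathcal{U}=\langle S^{\mathcal U},R^{\mathcal U},V^{\mathcal U}\rangle$ where $S^{\mathcal U}$ is the smallest subset of $T$ containing $(w,\alpha)$ closed under: $(x,\beta)\in S^{\mathcal U}$, $(u,\gamma)\in T$, $xR_iu$, $\beta Q_i\gamma$ imply $(u,\gamma)\in S^{\mathcal U}$; $R^{\mathcal U}_i$ relates $(x,\beta),(u,\gamma)\in S^{\mathcal U}$ iff $xR_iu$ and $\beta Q_i\gamma$; $V^{\mathcal U}(p)=\{(x,\beta)\in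 S^{\mathcal U}\mid x\in V(p)\}$. Target agents: $\mathsf{ta}(p)=\varnothing$, $\mathsf{ta}(\neg\phi)=\mathsf{ta}(\phi)$, $\mathsf{ta}(\phi\wedge\psi)=\mathsf{ta}(\phi)\cup\mathsf{ta}(\psi)$, $\mathsf{ta}(B_i\phi)=\{i\}$. DBI formulas: $\varphi ::= B_i\xi \mid B_i(\xi\wedge\varphi)\mid(\varphi\wedge\varphi)\mid B_i\varphi$, $\xi$ purely propositional. DBI normal: $B_i\xi$ always; $B_i\varphi$, $B_i(\xi\wedge\varphi)$ iff $\varphi$ DBI normal and $i\notin\mathsf{ta}(\varphi)$; $\varphi\wedge\psi$ iff both DBI normal and $\mathsf{ta}(\varphi)\cap\mathsf{ta}(\psi)=\varnothing$. Action model $\mathcal{U}_\varphi=\langle E^\varphi,Q^\varphi,\mathsf{pre}^\varphi\rangle$ for DBI normal $\varphi$, recursively; always $E^\varphi=\{0,-1\}\sqcup D^\varphi$, $\varnothing\ne D^\varphi\subseteq\{1,2,\dots\}$, $\mathsf{pre}^\varphi(0)=\mathsf{pre}^\varphi(-1)=\top$; $\underline{Q}_j$ denotes $Q_j\cap((E\setminus\{0\})\times(E\setminus\{0\}))$. (1) $\varphi=B_i\xi$: $D=\{m\}$, $\mathsf{pre}(m)=\xi$, $Q_j=\{(0,-1),(m,-1),(-1,-1)\}$ ($j\ne i$), $Q_i=\{(0,m),(m,m),(-1,-1)\}$. (2) $\varphi=B_i\psi$: fresh $m\ge1$, $m\notin D^\psi$; $D^\varphi=D^\psi\sqcup\{m\}$;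 $\mathsf{pre}^\varphi$ extends $\mathsf{pre}^\psi$ with $\mathsf{pre}^\varphi(m)=\top$; $Q^\varphi_j=\underline{Q}^\psi_j\cup\{(0,-1)\}\cup\{(m,k)\mid(0,k)\in Q^\psi_j\}$ ($j\ne i$); $Q^\varphi_i=\underline{Q}^\psi_i\cup\{(0,m),(m,m)\}$. (3) $\varphi=B_i(\xi\wedge\psi)$: as (2) but $\mathsf{pre}^\varphi(m)=\xi$. (4) $\varphi=\psi\wedge\theta$: with $D^\psi\cap D^\theta=\varnothing$, $D^\varphi=D^\psi\sqcup D^\theta$, $\mathsf{pre}^\varphi=\mathsf{pre}^\psi\cup\mathsf{pre}^\theta$, $Q^\varphi_j=\underline{Q}^\psi_j\cup\underline{Q}^\theta_j\cup\{(0,k)\mid(0,k)\in Q^\psi_j\cup Q^\theta_j, k\in D^\psi\sqcup D^\theta\}\cup\{(0,-1)\mid\text{no such }k\text{ exists}\}$. In $\mathcal{U}_\varphi$ every event has exactly one $Q^\varphi_j$-successor for each agent $j$. Independence: the modality sequences of a formula $\theta$ are the empty sequence together with, for each occurrence of a subformula $B_i\eta$ in $\theta$, the sequence $B_{i_1}\dots B_{i_k}$ of belief operators on the path from the root of the syntax tree of $\theta$ to that occurrence (so $i_k=i$). $\theta$ is in $\top$-shape w.r.t. event $\alpha_0\in E^\varphi$ iff for every modality sequence $B_{i_1}\dots B_{i_k}$ of $\theta$ ($k\ge0$), the unique events $\alpha_1,\dots,\alpha_k$ with $\alpha_0Q^\varphi_{i_1}\alpha_1Q^\varphi_{i_2}\alpha_2\cdots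 Q^\varphi_{i_k}\alpha_k$ satisfy $\mathsf{pre}^\varphi(\alpha_j)=\top$ for all $0\le j\le k$. $\theta$ is independent of $\varphi$ iff it is in $\top$-shape w.r.t. $0$. *)

theory Defs
  imports Main
begin

datatype ('p, 'a) fm =
    Atom 'p
  | Neg "('p, 'a) fm"
  | And "('p, 'a) fm" "('p, 'a) fm"
  | Bel 'a "('p, 'a) fm"

definition tt :: "('p, 'a) fm" where
  "tt = Neg (And (Atom undefined) (Neg (Atom undefined)))"

fun propositional :: "('p, 'a) fm \<Rightarrow> bool" where
  "propositional (Atom p) = True"
| "propositional (Neg f) = propositional f"
| "propositional (And f g) = (propositional f \<and> propositional g)"
| "propositional (Bel i f) = False"

type_synonym ('s, 'a, 'p) kripke = "'s set \<times> ('a \<Rightarrow> ('s \<times> 's) set) \<times> ('p \<Rightarrow> 's set)"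

definition kripke :: "('s, 'a, 'p) kripke \<Rightarrow> bool" where
  "kripke M = (case M of (S, R, V) \<Rightarrow>
     S \<noteq> {} \<and> (\<forall>i. R i \<subseteq> S \<times> S) \<and> (\<forall>p. V p \<subseteq> S))"

fun sat :: "('s, 'a, 'p) kripke \<Rightarrow> 's \<Rightarrow> ('p, 'a) fm \<Rightarrow> bool" where
  "sat (S, R, V) w (Atom p) = (w \<in> V p)"
| "sat M w (Neg f) = (\<not> sat M w f)"
| "sat M w (And f g) = (sat M w f \<and> sat M w g)"
| "sat (S, R, V) w (Bel i f) = (\<forall>u. (w, u) \<in> R i \<longrightarrow> sat (S, R, V) u f)"

type_synonym ('e, 'a, 'p) amodel = "'e set \<times> ('a \<Rightarrow> ('e \<times> 'e) set) \<times> ('e \<Rightarrow> ('p, 'a) fm)"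

definition amodel :: "('e, 'a, 'p) amodel \<Rightarrow> bool" where
  "amodel U = (case U of (E, Q, pre) \<Rightarrow> E \<noteq> {} \<and> (\<forall>i. Q i \<subseteq> E \<times> E))"

definition Tset :: "('s, 'a, 'p) kripke \<Rightarrow> ('e, 'a, 'p) amodel \<Rightarrow> ('s \<times> 'e) set" where
  "Tset M U = (case M of (S, R, V) \<Rightarrow> case U of (E, Q, pre) \<Rightarrow>
     {(x, b). x \<in> S \<and> b \<in> E \<and> sat M x (pre b)})"

inductive_set upd_states :: "('s, 'a, 'p) kripke \<Rightarrow> ('e, 'a, 'p) amodel \<Rightarrow> 's \<Rightarrow> 'e \<Rightarrow> ('s \<times> 'e) set"
  for M U w a where
  base: "(w, a) \<in> Tset M U \<Longrightarrow> (w, a) \<in> upd_states M U w a"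
| step: "\<lbrakk> (x, b) \<in> upd_states M U w a; (u, c) \<in> Tset M U;
           (x, u) \<in> fst (snd M) i; (b, c) \<in> fst (snd U) i \<rbrakk>
         \<Longrightarrow> (u, c) \<in> upd_states M U w a"

text \<open>The pointed update \<open>M \<odot> U\<close> generated from \<open>(w, a)\<close>
  (only meaningful when \<open>M, w \<Turnstile> pre a\<close>).\<close>
definition update :: "('s, 'a, 'p) kripke \<Rightarrow> ('e, 'a, 'p) amodel \<Rightarrow> 's \<Rightarrow> 'e \<Rightarrow> ('s \<times> 'e, 'a, 'p) kripke" where
  "update M U w a = (case M of (S, R, V) \<Rightarrow> case U of (E, Q, pre) \<Rightarrow>
     (upd_states M U w a,
      \<lambda>i. {((x, b), (u, c)). (x, b) \<in> upd_states M U w a \<and> (u, c) \<in> upd_states M U w a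
                            \<and> (x, u) \<in> R i \<and> (b, c) \<in> Q i},
      \<lambda>p. {(x, b). (x, b) \<in> upd_states M U w a \<and> x \<in> V p}))"

definition pre_defined :: "('s, 'a, 'p) kripke \<Rightarrow> ('e, 'a, 'p) amodel \<Rightarrow> 's \<Rightarrow> 'e \<Rightarrow> bool" where
  "pre_defined M U w a = (case U of (E, Q, pre) \<Rightarrow> sat M w (pre a))"

fun ta :: "('p, 'a) fm \<Rightarrow> 'a set" where
  "ta (Atom p) = {}"
| "ta (Neg f) = ta f"
| "ta (And f g) = ta f \<union> ta g"
| "ta (Bel i f) = {i}"

inductive dbi :: "('p, 'a) fm \<Rightarrow> bool" where
  "propositional xi \<Longrightarrow> dbi (Bel i xi)"
| "propositional xi \<Longrightarrow> dbi f \<Longrightarrow> dbi (Bel i (And xi f))"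
| "dbi f \<Longrightarrow> dbi g \<Longrightarrow> dbi (And f g)"
| "dbi f \<Longrightarrow> dbi (Bel i f)"

inductive dbi_normal :: "('p, 'a) fm \<Rightarrow> bool" where
  "propositional xi \<Longrightarrow> dbi_normal (Bel i xi)"
| "dbi_normal f \<Longrightarrow> i \<notin> ta f \<Longrightarrow> dbi_normal (Bel i f)"
| "propositional xi \<Longrightarrow> dbi_normal f \<Longrightarrow> i \<notin> ta f \<Longrightarrow> dbi_normal (Bel i (And xi f))"
| "dbi_normal f \<Longrightarrow> dbi_normal g \<Longrightarrow> ta f \<inter> ta g = {} \<Longrightarrow> dbi_normal (And f g)"

definition Qbar :: "('a \<Rightarrow> (int \<times> int) set) \<Rightarrow> 'a \<Rightarrow> (int \<times> int) set" where
  "Qbar Q j = {(x, y). (x, y) \<in> Q j \<and> x \<noteq> 0 \<and> y \<noteq> 0}"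

text \<open>\<open>Ucon phi D Q pre\<close>: \<open>(E, Q, pre)\<close> with \<open>E = {0,-1} \<union> D\<close> is one admissible
  construction of \<open>U_phi\<close> (the fresh labels m and the disjoint label sets are
  arbitrary choices; the relation covers all of them). Preconditions are
  constrained only on E.\<close>
inductive Ucon :: "('p, 'a) fm \<Rightarrow> int set \<Rightarrow> ('a \<Rightarrow> (int \<times> int) set) \<Rightarrow> (int \<Rightarrow> ('p, 'a) fm) \<Rightarrow> bool" where
  c1: "\<lbrakk> propositional xi; m \<ge> 1; pre 0 = tt; pre (-1) = tt; pre m = xi;
         \<And>j. j \<noteq> i \<Longrightarrow> Q j = {(0, -1), (m, -1), (-1, -1)};
         Q i = {(0, m), (m, m), (-1, -1)} \<rbrakk>
       \<Longrightarrow> Ucon (Bel i xi) {m} Q pre"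
| c2: "\<lbrakk> Ucon f D' Q' pre'; m \<ge> 1; m \<notin> D';
         pre 0 = tt; pre (-1) = tt; pre m = tt; \<And>k. k \<in> D' \<Longrightarrow> pre k = pre' k;
         \<And>j. j \<noteq> i \<Longrightarrow> Q j = Qbar Q' j \<union> {(0, -1)} \<union> {(m, k) | k. (0, k) \<in> Q' j};
         Q i = Qbar Q' i \<union> {(0, m), (m, m)} \<rbrakk>
       \<Longrightarrow> Ucon (Bel i f) (D' \<union> {m}) Q pre"
| c3: "\<lbrakk> propositional xi; Ucon f D' Q' pre'; m \<ge> 1; m \<notin> D';
         pre 0 = tt; pre (-1) = tt; pre m = xi; \<And>k. k \<in> D' \<Longrightarrow> pre k = pre' k;
         \<And>j. j \<noteq> i \<Longrightarrow> Q j = Qbar Q' j \<union> {(0, -1)} \<union> {(m, k) | k. (0, k) \<in> Q' j};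
         Q i = Qbar Q' i \<union> {(0, m), (m, m)} \<rbrakk>
       \<Longrightarrow> Ucon (Bel i (And xi f)) (D' \<union> {m}) Q pre"
| c4: "\<lbrakk> Ucon f D1 Q1 pre1; Ucon g D2 Q2 pre2; D1 \<inter> D2 = {};
         pre 0 = tt; pre (-1) = tt;
         \<And>k. k \<in> D1 \<Longrightarrow> pre k = pre1 k; \<And>k. k \<in> D2 \<Longrightarrow> pre k = pre2 k;
         \<And>j. Q j = Qbar Q1 j \<union> Qbar Q2 j
                  \<union> {(0, k) | k. (0, k) \<in> Q1 j \<union> Q2 j \<and> k \<in> D1 \<union> D2}
                  \<union> (if \<exists>k. (0, k) \<in> Q1 j \<union> Q2 j \<and> k \<in> D1 \<union> D2 then {} else {(0, -1)}) \<rbrakk>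
       \<Longrightarrow> Ucon (And f g) (D1 \<union> D2) Q pre"

definition Uevents :: "int set \<Rightarrow> int set" where
  "Uevents D = {0, -1} \<union> D"

text \<open>Modality sequences: the empty one plus, for every occurrence of a
  subformula \<open>B_i eta\<close>, the agents of belief operators on the path from the root
  to (and including) that occurrence.\<close>
fun mseqs :: "('p, 'a) fm \<Rightarrow> 'a list set" where
  "mseqs (Atom p) = {[]}"
| "mseqs (Neg f) = mseqs f"
| "mseqs (And f g) = mseqs f \<union> mseqs g"
| "mseqs (Bel i f) = {[]} \<union> (\<lambda>s. i # s) ` mseqs f"

fun wpath :: "('a \<Rightarrow> ('e \<times> 'e) set) \<Rightarrow> 'e \<Rightarrow> 'a list \<Rightarrow> 'e list \<Rightarrow> bool" where
  "wpath Q a [] [] = True"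
| "wpath Q a (i # is) (b # bs) = ((a, b) \<in> Q i \<and> wpath Q b is bs)"
| "wpath Q a _ _ = False"

definition top_shape :: "('p, 'a) fm \<Rightarrow> ('a \<Rightarrow> (int \<times> int) set) \<Rightarrow> (int \<Rightarrow> ('p, 'a) fm) \<Rightarrow> int \<Rightarrow> bool" where
  "top_shape th Q pre a0 =
     (\<forall>s \<in> mseqs th. \<forall>bs. wpath Q a0 s bs \<longrightarrow> (\<forall>b \<in> set (a0 # bs). pre b = tt))"

definition independent :: "('p, 'a) fm \<Rightarrow> ('a \<Rightarrow> (int \<times> int) set) \<Rightarrow> (int \<Rightarrow> ('p, 'a) fm) \<Rightarrow> bool" where
  "independent th Q pre = top_shape th Q pre 0"

end

theory Submission
  imports Defs
begin

lemma sat_tt[simp]: "sat M w tt"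
  unfolding tt_def by (cases M) auto

lemma inv_ucon:
  "Ucon f D Q pre \<Longrightarrow>
     (\<forall>j. Q j \<subseteq> ({0, -1} \<union> D) \<times> ({0, -1} \<union> D))
   \<and> (\<forall>j x. x \<in> {0, -1} \<union> D \<longrightarrow> (\<exists>c. (x, c) \<in> Q j))
   \<and> (\<forall>j x. (x, 0) \<notin> Q j) \<and> (\<forall>d\<in>D. d \<ge> 1) \<and> pre 0 = tt"
proof (induction rule: Ucon.induct)
  case (c1 xi m pre i Q)
  have Qj: "\<And>j. j \<noteq> i \<Longrightarrow> Q j = {(0, -1), (m, -1), (-1, -1)}" by fact
  have Qi: "Q i = {(0, m), (m, m), (-1, -1)}" by fact
  have m: "m \<ge> 1" by fact
  show ?case
  proof (intro conjI allI impI)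
    fix j show "Q j \<subseteq> ({0, -1} \<union> {m}) \<times> ({0, -1} \<union> {m})"
      using Qj[of j] Qi by (cases "j = i") auto
  next
    fix j x assume "x \<in> {0, -1} \<union> {m}"
    then show "\<exists>c. (x, c) \<in> Q j"
      using Qj[of j] Qi by (cases "j = i") auto
  next
    fix j x show "(x, 0) \<notin> Q j" using Qj[of j] Qi m by (cases "j = i") auto
  qed (use m \<open>pre 0 = tt\<close> in auto)
next
  case (c2 f D' Q' pre' m pre i Q)
  note I1 = c2.IH[THEN conjunct1]
  note I2 = c2.IH[THEN conjunct2, THEN conjunct1]
  note I3 = c2.IH[THEN conjunct2, THEN conjunct2, THEN conjunct1]
  note I4 = c2.IH[THEN conjunct2, THEN conjunct2, THEN conjunct2, THEN conjunct1]
  have Qj: "\<And>j. j \<noteq> i \<Longrightarrow> Q j = Qbar Q' j \<union> {(0, -1)} \<union> {(m, k) | k. (0, k) \<in> Q' j}" by fact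
  have Qi: "Q i = Qbar Q' i \<union> {(0, m), (m, m)}" by fact
  have m: "m \<ge> 1" "m \<notin> D'" by fact+
  show ?case
  proof (intro conjI allI impI)
    fix j
    have QE': "Q' j \<subseteq> ({0, -1} \<union> D') \<times> ({0, -1} \<union> D')" using I1 by blast
    show "Q j \<subseteq> ({0, -1} \<union> (D' \<union> {m})) \<times> ({0, -1} \<union> (D' \<union> {m}))"
    proof (cases "j = i")
      case True
      show ?thesis unfolding True Qi Qbar_def using QE'[unfolded True] by blast
    next
      case False
      show ?thesis unfolding Qj[OF False] Qbar_def using QE' by blast
    qed
  next
    fix j x assume x: "x \<in> {0, -1} \<union> (D' \<union> {m})"
    show "\<exists>c. (x, c) \<in> Q j"
    proof (cases "x = 0 \<or> x = m")
      case True
      obtain k where "(0, k) \<in> Q' j" using I2 by blast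
      show ?thesis
      proof (cases "j = i")
        case ji: True
        show ?thesis using True unfolding ji Qi by blast
      next
        case ji: False
        show ?thesis using True \<open>(0, k) \<in> Q' j\<close> unfolding Qj[OF ji] by blast
      qed
    next
      case False
      then have "x \<in> {0, -1} \<union> D'" "x \<noteq> 0" using x by auto
      then obtain c where c: "(x, c) \<in> Q' j" using I2 by blast
      moreover have "c \<noteq> 0" using I3 c by metis
      ultimately have "(x, c) \<in> Qbar Q' j" using \<open>x \<noteq> 0\<close> by (simp add: Qbar_def)
      then show ?thesis using Qj[of j] Qi by (cases "j = i") blast+
    qed
  next
    fix j x have "(0, 0) \<notin> Q' j" using I3 by blast
    show "(x, 0) \<notin> Q j"
    proof (cases "j = i")
      case True
      show ?thesis unfolding True Qi Qbar_def using m(1) by auto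
    next
      case False
      show ?thesis unfolding Qj[OF False] Qbar_def using \<open>(0, 0) \<notin> Q' j\<close> by auto
    qed
  qed (use m I4 \<open>pre 0 = tt\<close> in auto)
next
  case (c3 xi f D' Q' pre' m pre i Q)
  note I1 = c3.IH[THEN conjunct1]
  note I2 = c3.IH[THEN conjunct2, THEN conjunct1]
  note I3 = c3.IH[THEN conjunct2, THEN conjunct2, THEN conjunct1]
  note I4 = c3.IH[THEN conjunct2, THEN conjunct2, THEN conjunct2, THEN conjunct1]
  have Qj: "\<And>j. j \<noteq> i \<Longrightarrow> Q j = Qbar Q' j \<union> {(0, -1)} \<union> {(m, k) | k. (0, k) \<in> Q' j}" by fact
  have Qi: "Q i = Qbar Q' i \<union> {(0, m), (m, m)}" by fact
  have m: "m \<ge> 1" "m \<notin> D'" by fact+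
  show ?case
  proof (intro conjI allI impI)
    fix j
    have QE': "Q' j \<subseteq> ({0, -1} \<union> D') \<times> ({0, -1} \<union> D')" using I1 by blast
    show "Q j \<subseteq> ({0, -1} \<union> (D' \<union> {m})) \<times> ({0, -1} \<union> (D' \<union> {m}))"
    proof (cases "j = i")
      case True
      show ?thesis unfolding True Qi Qbar_def using QE'[unfolded True] by blast
    next
      case False
      show ?thesis unfolding Qj[OF False] Qbar_def using QE' by blast
    qed
  next
    fix j x assume x: "x \<in> {0, -1} \<union> (D' \<union> {m})"
    show "\<exists>c. (x, c) \<in> Q j"
    proof (cases "x = 0 \<or> x = m")
      case True
      obtain k where "(0, k) \<in> Q' j" using I2 by blast
      show ?thesis
      proof (cases "j = i")
        case ji: True
        show ?thesis using True unfolding ji Qi by blast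
      next
        case ji: False
        show ?thesis using True \<open>(0, k) \<in> Q' j\<close> unfolding Qj[OF ji] by blast
      qed
    next
      case False
      then have "x \<in> {0, -1} \<union> D'" "x \<noteq> 0" using x by auto
      then obtain c where c: "(x, c) \<in> Q' j" using I2 by blast
      moreover have "c \<noteq> 0" using I3 c by metis
      ultimately have "(x, c) \<in> Qbar Q' j" using \<open>x \<noteq> 0\<close> by (simp add: Qbar_def)
      then show ?thesis using Qj[of j] Qi by (cases "j = i") blast+
    qed
  next
    fix j x have "(0, 0) \<notin> Q' j" using I3 by blast
    show "(x, 0) \<notin> Q j"
    proof (cases "j = i")
      case True
      show ?thesis unfolding True Qi Qbar_def using m(1) by auto
    next
      case False
      show ?thesis unfolding Qj[OF False] Qbar_def using \<open>(0, 0) \<notin> Q' j\<close> by auto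
    qed
  qed (use m I4 \<open>pre 0 = tt\<close> in auto)
next
  case (c4 f D1 Q1 pre1 g D2 Q2 pre2 pre Q)
  note A1 = c4.IH(1)[THEN conjunct1]
  note A2 = c4.IH(1)[THEN conjunct2, THEN conjunct1]
  note A3 = c4.IH(1)[THEN conjunct2, THEN conjunct2, THEN conjunct1]
  note A4 = c4.IH(1)[THEN conjunct2, THEN conjunct2, THEN conjunct2, THEN conjunct1]
  note B1 = c4.IH(2)[THEN conjunct1]
  note B2 = c4.IH(2)[THEN conjunct2, THEN conjunct1]
  note B3 = c4.IH(2)[THEN conjunct2, THEN conjunct2, THEN conjunct1]
  note B4 = c4.IH(2)[THEN conjunct2, THEN conjunct2, THEN conjunct2, THEN conjunct1]
  have Qj: "\<And>j. Q j = Qbar Q1 j \<union> Qbar Q2 j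
                  \<union> {(0, k) | k. (0, k) \<in> Q1 j \<union> Q2 j \<and> k \<in> D1 \<union> D2}
                  \<union> (if \<exists>k. (0, k) \<in> Q1 j \<union> Q2 j \<and> k \<in> D1 \<union> D2 then {} else {(0, -1)})" by fact
  define K where "K j = {(0::int, k) | k. (0, k) \<in> Q1 j \<union> Q2 j \<and> k \<in> D1 \<union> D2}" for j
  define Zs where "Zs j = (if \<exists>k. (0, k) \<in> Q1 j \<union> Q2 j \<and> k \<in> D1 \<union> D2 then {} else {(0::int, -1::int)})" for j
  have Qj': "Q j = Qbar Q1 j \<union> Qbar Q2 j \<union> K j \<union> Zs j" for j
    unfolding K_def Zs_def by (rule Qj)
  have Z: "Zs j \<subseteq> {(0::int, -1::int)}" for j unfolding Zs_def by simp
  have QbarS: "Qbar Q' j \<subseteq> Q' j" for Q' :: "'b \<Rightarrow> (int \<times> int) set" and j unfolding Qbar_def by blast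
  have Qbar0: "(x, 0) \<notin> Qbar Q' j" for Q' :: "'b \<Rightarrow> (int \<times> int) set" and j x unfolding Qbar_def by blast
  show ?case
  proof (intro conjI allI impI)
    fix j
    have "Q1 j \<subseteq> ({0, -1} \<union> D1) \<times> ({0, -1} \<union> D1)" "Q2 j \<subseteq> ({0, -1} \<union> D2) \<times> ({0, -1} \<union> D2)"
      using A1 B1 by blast+
    then show "Q j \<subseteq> ({0, -1} \<union> (D1 \<union> D2)) \<times> ({0, -1} \<union> (D1 \<union> D2))"
      unfolding Qj'[of j] K_def using Z[of j] QbarS[of Q1 j] QbarS[of Q2 j] by blast
  next
    fix j x assume x: "x \<in> {0, -1} \<union> (D1 \<union> D2)"
    show "\<exists>c. (x, c) \<in> Q j"
    proof (cases "x = 0")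
      case True
      show ?thesis
      proof (cases "\<exists>k. (0, k) \<in> Q1 j \<union> Q2 j \<and> k \<in> D1 \<union> D2")
        case ex: True
        then obtain k where "(0, k) \<in> Q1 j \<union> Q2 j \<and> k \<in> D1 \<union> D2" by blast
        then have "(0, k) \<in> Q j" unfolding Qj'[of j] K_def by blast
        then show ?thesis using True by blast
      next
        case ex: False
        have "Zs j = {(0::int, -1::int)}"
          unfolding Zs_def using ex by (rule if_not_P)
        then have "(0, -1) \<in> Q j" unfolding Qj'[of j] by blast
        then show ?thesis using True by blast
      qed
    next
      case False
      then have "x \<in> {0, -1} \<union> D1 \<or> x \<in> {0, -1} \<union> D2" using x by blast
      then have "\<exists>c. (x, c) \<in> Qbar Q1 j \<or> (x, c) \<in> Qbar Q2 j"
      proof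
        assume "x \<in> {0, -1} \<union> D1"
        then obtain c where c: "(x, c) \<in> Q1 j" using A2 by blast
        moreover have "c \<noteq> 0" using A3 c by metis
        ultimately show ?thesis using False unfolding Qbar_def by blast
      next
        assume "x \<in> {0, -1} \<union> D2"
        then obtain c where c: "(x, c) \<in> Q2 j" using B2 by blast
        moreover have "c \<noteq> 0" using B3 c by metis
        ultimately show ?thesis using False unfolding Qbar_def by blast
      qed
      then show ?thesis unfolding Qj'[of j] by blast
    qed
  next
    fix j x
    have "0 \<notin> D1" "0 \<notin> D2" using A4 B4 by force+
    then have "(x, 0) \<notin> K j" unfolding K_def by blast
    moreover have "(x, 0) \<notin> Zs j" using Z[of j] by auto
    ultimately show "(x, 0) \<notin> Q j" unfolding Qj'[of j] using Qbar0[of x Q1 j] Qbar0[of x Q2 j] by blast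
  qed (use A4 B4 \<open>pre 0 = tt\<close> in auto)
qed

lemma mseqs_nil: "[] \<in> mseqs th"
  by (induction th) auto

lemma main:
  fixes E :: "int set"
  assumes QE: "\<And>j. Q j \<subseteq> E \<times> E" and tot: "\<And>j x. x \<in> E \<Longrightarrow> \<exists>c. (x, c) \<in> Q j"
    and kr: "\<And>i. R i \<subseteq> S \<times> S"
  shows "(x, a) \<in> upd_states (S, R, V) (E, Q, pre) w a0 \<Longrightarrow> top_shape th Q pre a \<Longrightarrow>
     sat (S, R, V) x th \<longleftrightarrow> sat (update (S, R, V) (E, Q, pre) w a0) (x, a) th"
proof (induction th arbitrary: x a)
  case (Atom p)
  then show ?case by (simp add: update_def)
next
  case (Neg th)
  then show ?case by (simp add: top_shape_def)
next
  case (And th1 th2)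
  have "top_shape th1 Q pre a" "top_shape th2 Q pre a" using And.prems(2) by (auto simp: top_shape_def)
  then show ?case using And by simp
next
  case (Bel i f)
  have mem: "(x, a) \<in> Tset (S, R, V) (E, Q, pre)"
    using Bel.prems(1) by (cases rule: upd_states.cases) auto
  hence aE: "a \<in> E" by (simp add: Tset_def)
  have succ: "(u, c) \<in> upd_states (S, R, V) (E, Q, pre) w a0 \<and> top_shape f Q pre c"
    if xu: "(x, u) \<in> R i" and ac: "(a, c) \<in> Q i" for u c
  proof
    have "[i] \<in> mseqs (Bel i f)" using mseqs_nil[of f] by simp
    moreover have "wpath Q a [i] [c]" using ac by simp
    ultimately have "pre c = tt"
      using Bel.prems(2) unfolding top_shape_def by fastforce
    moreover have "u \<in> S" "c \<in> E" using kr[of i] QE[of i] xu ac by auto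
    ultimately have "(u, c) \<in> Tset (S, R, V) (E, Q, pre)" by (simp add: Tset_def)
    then show "(u, c) \<in> upd_states (S, R, V) (E, Q, pre) w a0"
      using upd_states.step[OF Bel.prems(1), of u c i] xu ac by simp
    show "top_shape f Q pre c"
      unfolding top_shape_def
    proof (intro ballI allI impI)
      fix s bs b assume s: "s \<in> mseqs f" and wp: "wpath Q c s bs" and b: "b \<in> set (c # bs)"
      have "wpath Q a (i # s) (c # bs)" using wp ac by simp
      moreover have "i # s \<in> mseqs (Bel i f)" using s by simp
      ultimately show "pre b = tt" using Bel.prems(2) b unfolding top_shape_def by fastforce
    qed
  qed
  define US where "US = upd_states (S, R, V) (E, Q, pre) w a0"
  define R' where "R' = (\<lambda>i. {((x, b), (u, c)). (x, b) \<in> US \<and> (u, c) \<in> US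
                            \<and> (x, u) \<in> R i \<and> (b, c) \<in> Q i})"
  define V' where "V' = (\<lambda>p. {(x, b). (x, b) \<in> US \<and> x \<in> V p})"
  have U: "update (S, R, V) (E, Q, pre) w a0 = (US, R', V')"
    unfolding update_def US_def R'_def V'_def by simp
  have IH: "sat (S, R, V) u f \<longleftrightarrow> sat (US, R', V') (u, c) f"
    if "(x, u) \<in> R i" "(a, c) \<in> Q i" for u c
    using Bel.IH[of u c] succ[OF that] U by (simp add: US_def)
  have R'i: "((x, a), (u, c)) \<in> R' i \<longleftrightarrow> (x, u) \<in> R i \<and> (a, c) \<in> Q i" for u c
    using succ[of u c] Bel.prems(1) unfolding R'_def US_def by auto
  have L2R: "sat (US, R', V') (x, a) (Bel i f)" if L: "sat (S, R, V) x (Bel i f)"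
  proof -
    have "sat (US, R', V') y f" if y: "((x, a), y) \<in> R' i" for y
    proof -
      obtain u c where yy: "y = (u, c)" by (cases y)
      have h: "(x, u) \<in> R i" "(a, c) \<in> Q i" using R'i[of u c] y yy by auto
      have "sat (S, R, V) u f" using L h(1) by simp
      then show ?thesis using IH[OF h] yy by simp
    qed
    then show ?thesis by simp
  qed
  have R2L: "sat (S, R, V) x (Bel i f)" if L: "sat (US, R', V') (x, a) (Bel i f)"
  proof -
    have "sat (S, R, V) u f" if xu: "(x, u) \<in> R i" for u
    proof -
      obtain c where ac: "(a, c) \<in> Q i" using tot[OF aE] by blast
      have "((x, a), (u, c)) \<in> R' i" using R'i xu ac by blast
      then have "sat (US, R', V') (u, c) f" using L by simp
      then show ?thesis using IH[OF xu ac] by simp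
    qed
    then show ?thesis by simp
  qed
  show ?case using L2R R2L U by metis
qed

theorem theorem5:
  fixes phi theta :: "('p, 'a::finite) fm"
    and S :: "'s set" and R :: "'a \<Rightarrow> ('s \<times> 's) set" and V :: "'p \<Rightarrow> 's set"
    and D :: "int set" and Q :: "'a \<Rightarrow> (int \<times> int) set" and pre :: "int \<Rightarrow> ('p, 'a) fm"
  assumes "card (UNIV :: 'a set) > 1"
    and "dbi_normal phi"
    and "Ucon phi D Q pre"
    and "independent theta Q pre"
    and "kripke (S, R, V)"
    and "v \<in> S"
  shows "sat (S, R, V) v theta \<longleftrightarrow>
         sat (update (S, R, V) (Uevents D, Q, pre) v 0) (v, 0) theta"
proof -
  note I = inv_ucon[OF assms(3)]
  have QE: "\<And>j. Q j \<subseteq> Uevents D \<times> Uevents D" using I[THEN conjunct1] unfolding Uevents_def by blast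
  have tot: "\<And>j x. x \<in> Uevents D \<Longrightarrow> \<exists>c. (x, c) \<in> Q j" using I[THEN conjunct2, THEN conjunct1] unfolding Uevents_def by blast
  have p0: "pre 0 = tt" using I[THEN conjunct2, THEN conjunct2, THEN conjunct2, THEN conjunct2] .
  have kr: "\<And>i. R i \<subseteq> S \<times> S" using assms(5) unfolding kripke_def by simp
  have "(v, 0) \<in> Tset (S, R, V) (Uevents D, Q, pre)"
    using assms(6) p0 by (simp add: Tset_def Uevents_def)
  then have A: "(v, 0) \<in> upd_states (S, R, V) (Uevents D, Q, pre) v 0"
    by (rule upd_states.base)
  have B: "top_shape theta Q pre 0" using assms(4) by (simp add: independent_def)
  show ?thesis
    apply (rule main[where E="Uevents D"])
    apply (rule QE)
    apply (erule tot)
    apply (rule kr)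
    apply (rule A)
    apply (rule B)
    done
qed

end
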